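(* Define, for real $x$, \[ c(x)=\left(\frac{160}{\pi^{5}}-\frac{16}{\pi^{3}}\right)\left(\frac{\pi}{2}-x\right),\qquad d(x)=c(x)+\left(\frac{960}{\pi^{6}}-\frac{96}{\pi^{4}}\right)\left(\frac{\pi}{2}-x\right)^{2}. \] Then for every $x\in\left(\frac{\pi}{2}-\frac{1}{3},\frac{\pi}{2}\right)$, \[ 2+\left(\frac{16}{\pi^{4}}+c(x)\right)x^{3}\tan x<\left(\frac{\sin x}{x}\right)^{2}+\frac{\tan x}{x}, \] and for every $x\in\left(\frac{\pi}{2}-\frac{1}{2},\frac{\pi}{2}\right)$, \[ \left(\frac{\sin x}{x}\right)^{2}+\frac{\tan x}{x}<2+\left(\frac{16}{\pi^{4}}+d(x)\right)x^{3}\tan x. \] *)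

theory Defs
  imports Complex_Main
begin

definition c_fun :: "real \<Rightarrow> real" where
  "c_fun x = (160 / pi ^ 5 - 16 / pi ^ 3) * (pi / 2 - x)"

definition d_fun :: "real \<Rightarrow> real" where
  "d_fun x = c_fun x + (960 / pi ^ 6 - 96 / pi ^ 4) * (pi / 2 - x) ^ 2"

end

theory Submission
  imports Defs "HOL-Analysis.Complex_Transcendental"
begin

fun eva :: "int list \<Rightarrow> real \<Rightarrow> real" where
  "eva [] A = 0"
| "eva (c#cs) A = of_int c + A * eva cs A"

fun evp :: "int list list \<Rightarrow> real \<Rightarrow> real \<Rightarrow> real" where
  "evp [] A T = 0"
| "evp (v#vs) A T = eva v A + T * evp vs A T"

definition mulb :: "int \<Rightarrow> int \<Rightarrow> int \<Rightarrow> int" where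
  "mulb lo hi L = (if 0 \<le> L then lo * L else hi * L)"

fun lowa :: "int list \<Rightarrow> int \<Rightarrow> int \<Rightarrow> int" where
  "lowa [] lo hi = 0"
| "lowa (c#cs) lo hi = c + mulb lo hi (lowa cs lo hi)"

fun lowp :: "int list list \<Rightarrow> int \<Rightarrow> int \<Rightarrow> int \<Rightarrow> int \<Rightarrow> int" where
  "lowp [] lo hi p q = 0"
| "lowp (v#vs) lo hi p q = lowa v lo hi + mulb p q (lowp vs lo hi p q)"

fun chk :: "int list list \<Rightarrow> int \<Rightarrow> int \<Rightarrow> int list \<Rightarrow> bool" where
  "chk cs lo hi (p#q#r) = (0 \<le> p \<and> p \<le> q \<and> 0 < lowp cs lo hi p q \<and> (r = [] \<or> chk cs lo hi (q#r)))"
| "chk cs lo hi _ = False"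

lemma mulb_le:
  fixes A E :: real
  assumes "of_int lo \<le> A" "A \<le> of_int hi" "0 \<le> A" "of_int L \<le> E"
  shows "of_int (mulb lo hi L) \<le> A * E"
proof (cases "0 \<le> L")
  case True
  have "of_int lo * of_int L \<le> A * of_int L" using assms True by (intro mult_right_mono) auto
  also have "\<dots> \<le> A * E" using assms by (intro mult_left_mono) auto
  finally show ?thesis using True by (simp add: mulb_def)
next
  case False
  have "of_int hi * of_int L \<le> A * of_int L" using assms False by (intro mult_right_mono_neg) auto
  also have "\<dots> \<le> A * E" using assms by (intro mult_left_mono) auto
  finally show ?thesis using False by (simp add: mulb_def)
qed

lemma lowa_le:
  assumes "of_int lo \<le> A" "A \<le> of_int hi" "0 \<le> A"
  shows "of_int (lowa v lo hi) \<le> eva v A"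
proof (induction v)
  case Nil then show ?case by simp
next
  case (Cons c cs)
  then show ?case using mulb_le[OF assms Cons.IH] by simp
qed

lemma lowp_le:
  assumes "of_int lo \<le> A" "A \<le> of_int hi" "0 \<le> A"
    and "of_int p \<le> T" "T \<le> of_int q" "0 \<le> T"
  shows "of_int (lowp vs lo hi p q) \<le> evp vs A T"
proof (induction vs)
  case Nil then show ?case by simp
next
  case (Cons v vs)
  then show ?case using mulb_le[OF assms(4,5,6) Cons.IH] lowa_le[OF assms(1,2,3), of v] by simp
qed

lemma chk_sound:
  assumes "chk cs lo hi (p#ps)" "of_int p \<le> T" "T \<le> of_int (last (p#ps))"
    and "of_int lo \<le> A" "A \<le> of_int hi" "0 \<le> lo"
  shows "0 < evp cs A T"
  using assms(1-3)
proof (induction ps arbitrary: p)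
  case Nil
  then show ?case by simp
next
  case (Cons q r)
  have c: "0 \<le> p" "p \<le> q" "0 < lowp cs lo hi p q" "r = [] \<or> chk cs lo hi (q#r)"
    using Cons.prems(1) by simp_all
  have A0: "0 \<le> A" using assms(4,6) by (meson of_int_0_le_iff order_trans)
  have T0: "0 \<le> T" using Cons.prems(2) c(1) by (meson of_int_0_le_iff order_trans)
  show ?case
  proof (cases "T \<le> of_int q")
    case True
    have "of_int (lowp cs lo hi p q) \<le> evp cs A T"
      by (rule lowp_le[OF assms(4,5) A0 Cons.prems(2) True T0])
    then show ?thesis using c(3) by (smt (verit) of_int_less_iff of_int_0)
  next
    case False
    then have q: "of_int q \<le> T" by simp
    have "r \<noteq> []" using False Cons.prems(3) by auto
    then have "chk cs lo hi (q#r)" using c(4) by simp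
    show ?thesis by (rule Cons.IH[OF \<open>chk cs lo hi (q#r)\<close> q]) (use Cons.prems(3) in auto)
  qed
qed

definition Rl :: "real \<Rightarrow> real \<Rightarrow> real" where
  "Rl a t = (10487731322880000) * t^4 + (-5243865661440000) * t^6 + (436988805120000) * t^8 + (-14566293504000) * t^10 + (195084288000) * t^12 + (-67737600) * t^14 + (-16934400) * t^16 + (-50400) * t^18 + (-50341110349824000) * a^1 * t^3 + (25170555174912000) * a^1 * t^5 + (-2097546264576000) * a^1 * t^7 + (69918208819200) * a^1 * t^9 + (-936404582400) * a^1 * t^11 + (325140480) * a^1 * t^13 + (81285120) * a^1 * t^15 + (241920) * a^1 * t^17 + (94389581905920000) * a^2 * t^2 + (-51389883482112000) * a^2 * t^4 + (6030445510656000) * a^2 * t^6 + (-305892163584000) * a^2 * t^8 + (7582275993600) * a^2 * t^10 + (-78643353600) * a^2 * t^12 + (-125314560) * a^2 * t^14 + (6320160) * a^2 * t^16 + (20160) * a^2 * t^18 + (-83901850583040000) * a^3 * t^1 + (62926387937280000) * a^3 * t^3 + (-13983641763840000) * a^3 * t^5 + (990507958272000) * a^3 * t^7 + (-30693261312000) * a^3 * t^9 + (390710476800) * a^3 * t^11 + (-33465600) * a^3 * t^15 + (-100800) * a^3 * t^17 + (31463193968640000) * a^4 + (-57682522275840000) * a^4 * t^2 + (22286429061120000) * a^4 * t^4 + (-1791654100992000) * a^4 * t^6 + (58850426880000) * a^4 * t^8 + (-780540364800) * a^4 * t^10 + (220147200) * a^4 * t^12 + (67586400) * a^4 * t^14 +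 (201600) * a^4 * t^16 + (36357468585984000) * a^5 * t^1 + (-19297425634099200) * a^5 * t^3 + (1489091375923200) * a^5 * t^5 + (-33194675404800) * a^5 * t^7 + (-697087641600) * a^5 * t^9 + (17073262080) * a^5 * t^11 + (1938853728) * a^5 * t^13 + (-45618048) * a^5 * t^15 + (-2064384) * a^5 * t^17 + (-16384) * a^5 * t^19 + (-12585277587456000) * a^6 + (9089367146496000) * a^6 * t^2 + (-804059401420800) * a^6 * t^4 + (30797306265600) * a^6 * t^6 + (-390168576000) * a^6 * t^8 + (135475200) * a^6 * t^10 + (33868800) * a^6 * t^12 + (100800) * a^6 * t^14 + (-1398364176384000) * a^7 * t^1 + (139836417638400) * a^7 * t^3 + (-6658877030400) * a^7 * t^5 + (78033715200) * a^7 * t^7 + (-27095040) * a^7 * t^9 + (-6773760) * a^7 * t^11 + (-20160) * a^7 * t^13"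

definition Rl_cs :: "int list list" where
  "Rl_cs = [[0, 0, 0, 0, 10051861189298894268003697526046720000000000000000, 0, -40207444757195577072014790104186880000000, 0], [0, 0, 0, -22337469309553098373341550057881600000000000000000000, 0, 96795700341396759617813383584153600000000000, 0, -37229115515921830622235916763136000], [0, 0, 20941377477706029725007703179264000000000000000000000000, 0, -127975084585981292763935963873280000000000000000, 0, 201657709044576582537111215800320000000, 0], [0, -9307278878980457655558979190784000000000000000000000000000, 0, 116340985987255720694487239884800000000000000000000, 0, -356779023694250876796427535646720000000000, 0, 25853552441612382376552719974400], [1615847027600773898534544998400000000000000000000000000000000, 0, -79176504352437921028192704921600000000000000000000000, 0, 343367493365164453438590812160000000000000000, 0, -123881605449392665554315116544000000, 0], [0, 32316940552015477970690899968000000000000000000000000000, 0, -179538558622308210948282777600000000000000000000, 0, 191187191294827017491951124480000000000, 0, -8549455172490867188013465600], [-5610579956947131592133836800000000000000000000000000000000, 0, 64521669504892013309539123200000000000000000000000, 0, -191694815195693662731239424000000000000000, 0, 32951025143975217287135232000000, 0], [0, -18701933189823771973779456000000000000000000000000000, 0, 88314684507501145431736320000000000000000000, 0, -29596706025644969825402880000000000, 0, 695756443073801040691200], [3246863401011071523225600000000000000000000000000000000, 0, -22728043807077500662579200000000000000000000000, 0, 43726359790402079293440000000000000000, 0, -2898985179474171002880000000, 0], [0, 4329151201348095364300800000000000000000000000000, 0, -19004458398775121018880000000000000000000, 0, -4316182940099637411840000000000, 0, -1677653460343848960], [-751588750234044334080000000000000000000000000000000, 0, 3912287869521855774720000000000000000000000,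 0, -4027416838237952409600000000000000, 0, 6990222751432704000000, 0], [0, -402636830482523750400000000000000000000000000, 0, 1679983534594326528000000000000000000, 0, 734119018541088768000000000, 0, -2912592813096960], [69902227514327040000000000000000000000000000000, 0, -281793354667130880000000000000000000000, 0, 7888272202137600000000000000, 0, 12135803387904000000, 0], [0, 970864271032320000000000000000000000000, 0, 0, 0, 578938621014835200000000, 0, -60197437440], [-168552824832000000000000000000000000000000, 0, -3118227259392000000000000000000000, 0, 16817659084800000000000000, 0, 250822656000000, 0], [0, 1685528248320000000000000000000000000, 0, -6939426816000000000000000000, 0, -94593584332800000000, 0, 0], [-292626432000000000000000000000000000000, 0, 1092123648000000000000000000000, 0, 348364800000000000000, 0, 0, 0], [0, 34836480000000000000000000000000, 0, -145152000000000000000000, 0, -29727129600000000, 0, 0], [-6048000000000000000000000000000000, 0, 24192000000000000000000000, 0, 0, 0, 0, 0], [0, 0, 0, 0, 0, -1638400000000, 0, 0]]"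

lemma Rl_chk: "chk Rl_cs 15707 15708 [0, 1, 2, 3, 4]"
  unfolding Rl_cs_def by (simp add: mulb_def)

lemma Rl_id: "evp Rl_cs (10^4 * a) (12 * t) = 10^28 * 12^19 * Rl a t"
  unfolding Rl_cs_def Rl_def
  by (simp only: evp.simps eva.simps of_int_numeral of_int_neg_numeral of_int_0 of_int_1 of_int_minus) algebra

lemma Rl_pos:
  assumes "15707 / 10^4 \<le> a" "a \<le> 15708 / 10^4" "0 \<le> t" "t \<le> 4 / 12"
  shows "0 < Rl a t"
proof -
  have "0 < evp Rl_cs (10^4 * a) (12 * t)"
    by (rule chk_sound[OF Rl_chk]) (use assms in \<open>simp_all add: field_simps\<close>)
  then show ?thesis unfolding Rl_id by (simp add: zero_less_mult_iff)
qed

definition Rh :: "real \<Rightarrow> real \<Rightarrow> real" where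
  "Rh a t = (-31463193968640000) * t^4 + (15731596984320000) * t^6 + (-1310966415360000) * t^8 + (43698880512000) * t^10 + (-780337152000) * t^12 + (8331724800) * t^14 + (-50803200) * t^16 + (151200) * t^18 + (146828238520320000) * a^1 * t^3 + (-73414119260160000) * a^1 * t^5 + (6117843271680000) * a^1 * t^7 + (-203928109056000) * a^1 * t^9 + (3641573376000) * a^1 * t^11 + (-38881382400) * a^1 * t^13 + (237081600) * a^1 * t^15 + (-705600) * a^1 * t^17 + (-264290829336576000) * a^2 * t^2 + (144730692255744000) * a^2 * t^4 + (-17304756682752000) * a^2 * t^6 + (891457162444800) * a^2 * t^8 + (-24034384281600) * a^2 * t^10 + (382121349120) * a^2 * t^12 + (-3759436800) * a^2 * t^14 + (21591360) * a^2 * t^16 + (-60480) * a^2 * t^18 + (220242357780480000) * a^3 * t^1 + (-168852474298368000) * a^3 * t^3 + (38542412611584000) * a^3 * t^5 + (-2753029472256000) * a^3 * t^7 + (87033603686400) * a^3 * t^9 + (-1514951424000) * a^3 * t^11 + (15908175360) * a^3 * t^13 + (-95891040) * a^3 * t^15 + (282240) * a^3 * t^17 + (-73414119260160000) * a^4 + (141584372858880000) * a^4 * t^2 + (-55497578250240000) * a^4 * t^4 + (4471852105728000) * a^4 * t^6 + (-147483721728000) * a^4 * t^8 + (2620564531200) * a^4 * t^10 + (-27890956800) * a^4 * t^12 + (169696800) * a^4 * t^14 + (-504000) * a^4 * t^16 + (-83901850583040000) * a^5 * t^1 + (41950925291520000) * a^5 * t^3 + (-3495910440960000) * a^5 * t^5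 + (116530348032000) * a^5 * t^7 + (-2080899072000) * a^5 * t^9 + (22217932800) * a^5 * t^11 + (-135475200) * a^5 * t^13 + (403200) * a^5 * t^15 + (26568919351296000) * a^6 + (-12165768334540800) * a^6 * t^2 + (1133673814425600) * a^6 * t^4 + (-58351878144000) * a^6 * t^6 + (2829467289600) * a^6 * t^8 + (-133873205760) * a^6 * t^10 + (4963607712) * a^6 * t^12 + (-128092608) * a^6 * t^14 + (2064384) * a^6 * t^16 + (-16384) * a^6 * t^18 + (-2796728352768000) * a^7 * t^1 + (279672835276800) * a^7 * t^3 + (-9988315545600) * a^7 * t^5 + (208089907200) * a^7 * t^7 + (-2221793280) * a^7 * t^9 + (13547520) * a^7 * t^11 + (-40320) * a^7 * t^13 + (1398364176384000) * a^8 + (-139836417638400) * a^8 * t^2 + (4994157772800) * a^8 * t^4 + (-104044953600) * a^8 * t^6 + (1110896640) * a^8 * t^8 + (-6773760) * a^8 * t^10 + (20160) * a^8 * t^12"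

definition Rh_cs :: "int list list" where
  "Rh_cs = [[0, 0, 0, 0, -908822776810240630821815510942748141158400000000000000000000, 0, 3289072906551347044878951372935659939430400000000000, 0, 1731091003448077392041553354176663126016000], [0, 0, 0, 852021353259600591395452041508826382336000000000000000000000000, 0, -3245795631465145110077912539081243361280000000000000000, 0, -1081931877155048370025970846360414453760000000, 0], [0, 0, -319508007472350221773294515565809893376000000000000000000000000000, 0, 1711650040030447616642649190531124428800000000000000000000, 0, -1470751145507643878004054119271188398080000000000, 0, -169051855805476307816557944743814758400], [0, 55470140186171913502308075619064217600000000000000000000000000000000, 0, -637906612140977005276542869619238502400000000000000000000000, 0, 1584861148176340385780230731973263360000000000000000, 0, 105657409878422692385348715464884224000000, 0], [-3714518316038297779172415778062336000000000000000000000000000000000000, 0, 170867842537761697841931125790867456000000000000000000000000000, 0, -655199758523421969381801116408217600000000000000000000, 0, 133840580593760888233672758987325440000000000, 0, 5896060819108409173289548854067200], [0, -27085029387779254639798865048371200000000000000000000000000000000, 0, 142196404285841086858944041503948800000000000000000000000, 0, -128976330417996450665708881182720000000000000000, 0, -3685038011942755733305968033792000000, 0], [1813729646503075087486531141632000000000000000000000000000000000000, 0, -19951026111533825962351842557952000000000000000000000000000, 0, 51556944581152227023922690785280000000000000000000, 0, -6727513514641586937160689254400000000000, 0, -119955664451261579860220313600], [0, 2204185334291931529931548262400000000000000000000000000000000, 0, -9918834004313691884691967180800000000000000000000000, 0, 4198448255794155295107710976000000000000000, 0, 74972290282038487412637696000000, 0], [-147601696492763272093630464000000000000000000000000000000000000,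 0, 1003691536150790250236687155200000000000000000000000000, 0, -1660519085543586811053342720000000000000000000, 0, 318569695777489182303191040000000000, 0, 1250758423487784010383360], [0, -71750824683982146156625920000000000000000000000000000000, 0, 306222269633423802347028480000000000000000000000, 0, -73215127228553210363904000000000000000, 0, -781724014679865006489600000, 0], [4804742724373804430131200000000000000000000000000000000000, 0, -26426084984055924365721600000000000000000000000000, 0, 28813411733917623386112000000000000000000, 0, -14719514638076897918976000000000, 0, -7447827883763957760], [0, 1251235084472344903680000000000000000000000000000000, 0, -5205333456886903603200000000000000000000000, 0, 763402358085805670400000000000000, 0, 4654892427352473600000, 0], [-83788063692344524800000000000000000000000000000000000, 0, 410299674393449594880000000000000000000000000, 0, -299476868275372032000000000000000000, 0, 532963319830334668800000000, 0, 21646635171840], [0, -13046427018067968000000000000000000000000000000, 0, 53378978836119552000000000000000000000, 0, -4545793386086400000000000000, 0, -13529146982400000, 0], [873644666388480000000000000000000000000000000000, 0, -3942055201996800000000000000000000000000, 0, 1779399917568000000000000000000, 0, -13431483452620800000000, 0, 0], [0, 77686898688000000000000000000000000000000, 0, -314215759872000000000000000000000, 0, 13212057600000000000000, 0, 0, 0], [-5202247680000000000000000000000000000000000, 0, 22109552640000000000000000000000000, 0, -5160960000000000000000000, 0, 211392921600000000, 0, 0], [0, -225792000000000000000000000000000000, 0, 903168000000000000000000000, 0, 0, 0, 0, 0], [15120000000000000000000000000000000000, 0, -60480000000000000000000000000, 0, 0, 0, -1638400000000, 0, 0]]"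

lemma Rh_chk: "chk Rh_cs 15707 15708 [0, 1, 2, 3, 4, 5, 6, 7, 8, 9, 10, 11, 12, 13, 14, 15, 16]"
  unfolding Rh_cs_def by (simp add: mulb_def)

lemma Rh_id: "evp Rh_cs (10^4 * a) (32 * t) = 10^32 * 32^18 * Rh a t"
  unfolding Rh_cs_def Rh_def
  by (simp only: evp.simps eva.simps of_int_numeral of_int_neg_numeral of_int_0 of_int_1 of_int_minus) algebra

lemma Rh_pos:
  assumes "15707 / 10^4 \<le> a" "a \<le> 15708 / 10^4" "0 \<le> t" "t \<le> 16 / 32"
  shows "0 < Rh a t"
proof -
  have "0 < evp Rh_cs (10^4 * a) (32 * t)"
    by (rule chk_sound[OF Rh_chk]) (use assms in \<open>simp_all add: field_simps\<close>)
  then show ?thesis unfolding Rh_id by (simp add: zero_less_mult_iff)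
qed

definition H1 :: "real \<Rightarrow> real \<Rightarrow> real" where
  "H1 a t = (5) * t^5 + (-24) * a^1 * t^4 + (45) * a^2 * t^3 + (-2) * a^2 * t^5 + (-40) * a^3 * t^2 + (10) * a^3 * t^4 + (15) * a^4 * t^1 + (-20) * a^4 * t^3 + (-1) * a^5 + (20) * a^5 * t^2 + (-10) * a^6 * t^1 + (2) * a^7"

definition H1_cs :: "int list list" where
  "H1_cs = [[0, 0, 0, 0, 0, -24300000000, 0, 486], [0, 0, 0, 0, 1215000000000000, 0, -8100000, 0], [0, 0, 0, -10800000000000000000, 0, 54000000000, 0, 0], [0, 0, 40500000000000000000000, 0, -180000000000000, 0, 0, 0], [0, -72000000000000000000000000, 0, 300000000000000000, 0, 0, 0, 0], [50000000000000000000000000000, 0, -200000000000000000000, 0, 0, 0, 0, 0]]"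

lemma H1_chk: "chk H1_cs 15707 15708 [0, 1]"
  unfolding H1_cs_def by (simp add: mulb_def)

lemma H1_id: "evp H1_cs (10^4 * a) (3 * t) = 10^28 * 3^5 * H1 a t"
  unfolding H1_cs_def H1_def
  by (simp only: evp.simps eva.simps of_int_numeral of_int_neg_numeral of_int_0 of_int_1 of_int_minus) algebra

lemma H1_pos:
  assumes "15707 / 10^4 \<le> a" "a \<le> 15708 / 10^4" "0 \<le> t" "t \<le> 1 / 3"
  shows "0 < H1 a t"
proof -
  have "0 < evp H1_cs (10^4 * a) (3 * t)"
    by (rule chk_sound[OF H1_chk]) (use assms in \<open>simp_all add: field_simps\<close>)
  then show ?thesis unfolding H1_id by (simp add: zero_less_mult_iff)
qed

definition Hd1 :: "real \<Rightarrow> real \<Rightarrow> real" where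
  "Hd1 a t = (15) * t^6 + (-70) * a^1 * t^5 + (126) * a^2 * t^4 + (-6) * a^2 * t^6 + (-105) * a^3 * t^3 + (28) * a^3 * t^5 + (35) * a^4 * t^2 + (-50) * a^4 * t^4 + (40) * a^5 * t^3 + (-1) * a^6 + (-10) * a^6 * t^2 + (-4) * a^7 * t^1 + (2) * a^8"

definition Hd1_cs :: "int list list" where
  "Hd1_cs = [[0, 0, 0, 0, 0, 0, -6400000000, 0, 128], [0, 0, 0, 0, 0, 0, 0, -1280000, 0], [0, 0, 0, 0, 5600000000000000000, 0, -16000000000, 0, 0], [0, 0, 0, -84000000000000000000000, 0, 320000000000000, 0, 0, 0], [0, 0, 504000000000000000000000000, 0, -2000000000000000000, 0, 0, 0, 0], [0, -1400000000000000000000000000000, 0, 5600000000000000000000, 0, 0, 0, 0, 0], [1500000000000000000000000000000000, 0, -6000000000000000000000000, 0, 0, 0, 0, 0, 0]]"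

lemma Hd1_chk: "chk Hd1_cs 15707 15708 [0, 1]"
  unfolding Hd1_cs_def by (simp add: mulb_def)

lemma Hd1_id: "evp Hd1_cs (10^4 * a) (2 * t) = 10^32 * 2^6 * Hd1 a t"
  unfolding Hd1_cs_def Hd1_def
  by (simp only: evp.simps eva.simps of_int_numeral of_int_neg_numeral of_int_0 of_int_1 of_int_minus) algebra

lemma Hd1_pos:
  assumes "15707 / 10^4 \<le> a" "a \<le> 15708 / 10^4" "0 \<le> t" "t \<le> 1 / 2"
  shows "0 < Hd1 a t"
proof -
  have "0 < evp Hd1_cs (10^4 * a) (2 * t)"
    by (rule chk_sound[OF Hd1_chk]) (use assms in \<open>simp_all add: field_simps\<close>)
  then show ?thesis unfolding Hd1_id by (simp add: zero_less_mult_iff)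
qed

lemma a_bounds: "1570796326794 / 10^12 \<le> pi/2" "pi/2 \<le> 1570796326795 / 10^12"
  using pi_approx by simp_all

lemma fact7: "fact 7 = (5040::real)"
  by (simp add: fact_numeral)

lemma sin_bounds:
  fixes t :: real
  assumes "0 \<le> t"
  shows "(5040 * t - 840 * t^3 + 42 * t^5 - t^7)/5040 \<le> sin t"
    and "sin t \<le> (5040 * t - 840 * t^3 + 42 * t^5 + t^7)/5040"
proof -
  have s: "(\<Sum>m<7. sin_coeff m * t^m) = t - t^3/6 + t^5/120"
    by (simp add: sin_coeff_def lessThan_nat_numeral fact_numeral)
  have "\<bar>sin t - (\<Sum>m<7. sin_coeff m * t^m)\<bar> \<le> inverse (fact 7) * \<bar>t\<bar> ^ 7"
    using Maclaurin_sin_bound[of t 7] .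
  moreover have "inverse (fact 7) * \<bar>t\<bar> ^ 7 = \<bar>t\<bar>^7/5040"
    unfolding fact7 by (simp add: field_simps)
  moreover have "\<bar>t\<bar> = t" using assms by simp
  ultimately have h: "\<bar>sin t - (t - t^3/6 + t^5/120)\<bar> \<le> t^7/5040"
    unfolding s by (metis (no_types))
  have e1: "(5040 * t - 840 * t^3 + 42 * t^5 - t^7)/5040 = t - t^3/6 + t^5/120 - t^7/5040"
    by (simp add: diff_divide_distrib add_divide_distrib)
  have e2: "(5040 * t - 840 * t^3 + 42 * t^5 + t^7)/5040 = t - t^3/6 + t^5/120 + t^7/5040"
    by (simp add: diff_divide_distrib add_divide_distrib)
  show "(5040 * t - 840 * t^3 + 42 * t^5 - t^7)/5040 \<le> sin t"
    using h unfolding e1 abs_le_iff by linarith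
  show "sin t \<le> (5040 * t - 840 * t^3 + 42 * t^5 + t^7)/5040"
    using h unfolding e2 abs_le_iff by linarith
qed

lemma sin_bounds_half:
  fixes t :: real
  assumes "0 \<le> t"
  shows "(322560 * t - 13440 * t^3 + 168 * t^5 - t^7)/645120 \<le> sin (t/2)"
    and "sin (t/2) \<le> (322560 * t - 13440 * t^3 + 168 * t^5 + t^7)/645120"
proof -
  have e1: "(5040 * (t/2) - 840 * (t/2)^3 + 42 * (t/2)^5 - (t/2)^7)/5040 = (322560 * t - 13440 * t^3 + 168 * t^5 - t^7)/645120"
    by (simp add: field_simps power_divide)
  have e2: "(5040 * (t/2) - 840 * (t/2)^3 + 42 * (t/2)^5 + (t/2)^7)/5040 = (322560 * t - 13440 * t^3 + 168 * t^5 + t^7)/645120"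
    by (simp add: field_simps power_divide)
  show "(322560 * t - 13440 * t^3 + 168 * t^5 - t^7)/645120 \<le> sin (t/2)"
    using sin_bounds(1)[of "t/2"] assms e1 by simp
  show "sin (t/2) \<le> (322560 * t - 13440 * t^3 + 168 * t^5 + t^7)/645120"
    using sin_bounds(2)[of "t/2"] assms e2 by simp
qed

lemma cubic_mono:
  fixes a v w x :: real
  assumes "0 \<le> a" "v \<le> w" "1 \<le> x"
  shows "a^5 * w * (1 - w^2 - 2 * x^2) \<le> a^5 * v * (1 - v^2 - 2 * x^2)"
proof -
  have e: "a^5 * v * (1 - v^2 - 2 * x^2) - a^5 * w * (1 - w^2 - 2 * x^2)
         = a^5 * ((w - v) * ((2 * x^2 - 1) + ((v + w/2)^2 + 3/4 * w^2)))"
    by (simp add: algebra_simps power2_eq_square power3_eq_cube)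
  have "1 \<le> x^2" using assms(3) by (rule one_le_power)
  then have "0 \<le> 2 * x^2 - 1" by linarith
  then have "0 \<le> a^5 * ((w - v) * ((2 * x^2 - 1) + ((v + w/2)^2 + 3/4 * w^2)))"
    using assms by (intro mult_nonneg_nonneg) auto
  then show ?thesis using e by linarith
qed

lemma cubic_mono6:
  fixes a v w x :: real
  assumes "0 \<le> a" "v \<le> w" "1 \<le> x"
  shows "a^6 * w * (1 - w^2 - 2 * x^2) \<le> a^6 * v * (1 - v^2 - 2 * x^2)"
proof -
  have "a^5 * w * (1 - w^2 - 2 * x^2) \<le> a^5 * v * (1 - v^2 - 2 * x^2)" by (rule cubic_mono[OF assms])
  then have "a * (a^5 * w * (1 - w^2 - 2 * x^2)) \<le> a * (a^5 * v * (1 - v^2 - 2 * x^2))"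
    using mult_left_mono[OF _ assms(1)] by blast
  then show ?thesis by (simp add: algebra_simps power_Suc[symmetric] eval_nat_numeral)
qed

lemma pow_le_self:
  fixes t :: real
  assumes "0 \<le> t" "t \<le> 1"
  shows "t ^ Suc n \<le> t"
proof -
  have "t ^ n \<le> 1" using assms by (rule power_le_one)
  then show ?thesis using assms(1) by (simp add: mult_left_le)
qed

lemma a_bnd: "15707 / 10^4 \<le> pi/2" "pi/2 \<le> 15708 / 10^4"
  using pi_approx by simp_all

lemma part1:
  fixes t :: real
  assumes t0: "0 < t" and t1: "t < 1/3"
  shows "2 + (16 / pi ^ 4 + c_fun (pi/2 - t)) * (pi/2 - t) ^ 3 * tan (pi/2 - t)
          < (sin (pi/2 - t) / (pi/2 - t)) ^ 2 + tan (pi/2 - t) / (pi/2 - t)"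
proof -
  define a where "a = pi/2"
  define x where "x = a - t"
  define s where "s = sin t"
  define c where "c = cos t"
  define k where "k = sin (t/2)"
  have abnd: "15707/10^4 \<le> a" "a \<le> 15708/10^4" using a_bnd unfolding a_def by simp_all
  have pia: "pi = 2 * a" unfolding a_def by simp
  have a0: "0 < a" using abnd by simp
  have x1: "1 \<le> x" using abnd t1 unfolding x_def by simp
  have x0: "0 < x" using x1 by simp
  have s0: "0 < s" unfolding s_def using t0 t1 pi_gt3 by (intro sin_gt_zero) auto
  have sinx: "sin x = c" unfolding x_def c_def a_def by (simp add: sin_cos_eq)
  have cosx: "cos x = s" unfolding x_def s_def a_def by (simp add: cos_sin_eq)
  have tanx: "tan x = c / s" by (simp add: tan_def sinx cosx)
  define L where "L = a + (5 - 2 * a^2) * t"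
  define h where "h = a^5 * x - L * x^5"
  define P where "P = a^5 * c^2 * s + a^5 * x * c - 2 * a^5 * x^2 * s - L * x^5 * c"
  have K: "16 / pi ^ 4 + c_fun x = L / a^5"
    unfolding c_fun_def L_def pia x_def using a0 by (simp add: field_simps) algebra
  have geq: "(sin x / x) ^ 2 + tan x / x - (2 + (L / a^5) * x ^ 3 * tan x) = P / (a^5 * x^2 * s)"
    unfolding sinx tanx P_def using a0 x0 s0 by (simp add: field_simps) (simp add: eval_nat_numeral)
  have c2: "c^2 = 1 - s^2" unfolding c_def s_def using sin_cos_squared_add[of t] by linarith
  have Peq: "P = a^5 * s * (1 - s^2 - 2 * x^2) + c * h"
    unfolding P_def h_def c2[symmetric] by (simp add: algebra_simps)
  define SU where "SU = (5040 * t - 840 * t^3 + 42 * t^5 + t^7)/5040"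
  define KU where "KU = (322560 * t - 13440 * t^3 + 168 * t^5 + t^7)/645120"
  have sSU: "s \<le> SU" unfolding s_def SU_def using sin_bounds(2)[of t] t0 by simp
  have kKU: "k \<le> KU" unfolding k_def KU_def using sin_bounds_half(2)[of t] t0 by simp
  have k0: "0 \<le> k" unfolding k_def using t0 t1 pi_gt3 by (intro sin_ge_zero) auto
  have ck: "c = 1 - 2 * k^2" unfolding c_def k_def using cos_double_sin[of "t/2"] by simp
  have k2: "k^2 \<le> KU^2" using k0 kKU by (intro power_mono) auto
  have hH: "h = t * H1 a t" unfolding h_def L_def x_def H1_def by algebra
  have H: "0 < H1 a t" using abnd t0 t1 by (intro H1_pos) auto
  have h0: "0 \<le> h" unfolding hH using t0 H by simp
  have m1: "a^5 * SU * (1 - SU^2 - 2 * x^2) \<le> a^5 * s * (1 - s^2 - 2 * x^2)"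
    using a0 sSU x1 by (intro cubic_mono) auto
  have m2: "(1 - 2 * KU^2) * h \<le> c * h"
    unfolding ck using k2 h0 by (intro mult_right_mono) auto
  define Pl where "Pl = a^5 * SU * (1 - SU^2 - 2 * x^2) + (1 - 2 * KU^2) * h"
  have PPl: "Pl \<le> P" unfolding Peq Pl_def using m1 m2 by linarith
  have e1: "5040 * SU = 5040 * t - 840 * t^3 + 42 * t^5 + t^7" unfolding SU_def by simp
  have e2: "645120 * KU = 322560 * t - 13440 * t^3 + 168 * t^5 + t^7" unfolding KU_def by simp
  have id1: "5040^3 * 128^2 * Pl = 128^2 * a^5 * (5040 * SU) * (5040^2 - (5040 * SU)^2 - 2 * 5040^2 * x^2)
       + 5040 * (645120^2 - 2 * (645120 * KU)^2) * h"
    unfolding Pl_def by algebra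
  have id2: "128^2 * a^5 * (5040 * t - 840 * t^3 + 42 * t^5 + t^7) * (5040^2 - (5040 * t - 840 * t^3 + 42 * t^5 + t^7)^2 - 2 * 5040^2 * (a-t)^2)
   + 5040 * (645120^2 - 2 * (322560 * t - 13440 * t^3 + 168 * t^5 + t^7)^2) * (a^5 * (a-t) - (a + (5-2 * a^2) * t) * (a-t)^5)
    = t^2 * Rl a t"
    unfolding Rl_def by algebra
  have "5040^3 * 128^2 * Pl = t^2 * Rl a t"
    unfolding id1 e1 e2 id2[symmetric] h_def L_def x_def by simp
  moreover have "0 < Rl a t" using abnd t0 t1 by (intro Rl_pos) auto
  ultimately have "0 < 5040^3 * 128^2 * Pl" using t0 by simp
  then have "0 < Pl" by (simp add: zero_less_mult_iff)
  then have "0 < P" using PPl by linarith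
  then have "0 < P / (a^5 * x^2 * s)" using a0 x0 s0 by simp
  then have "2 + (16 / pi ^ 4 + c_fun x) * x ^ 3 * tan x < (sin x / x) ^ 2 + tan x / x"
    using geq unfolding K by linarith
  then show ?thesis unfolding x_def a_def .
qed

lemma part2:
  fixes t :: real
  assumes t0: "0 < t" and t1: "t < 1/2"
  shows "(sin (pi/2 - t) / (pi/2 - t)) ^ 2 + tan (pi/2 - t) / (pi/2 - t)
          < 2 + (16 / pi ^ 4 + d_fun (pi/2 - t)) * (pi/2 - t) ^ 3 * tan (pi/2 - t)"
proof -
  define a where "a = pi/2"
  define x where "x = a - t"
  define s where "s = sin t"
  define c where "c = cos t"
  define k where "k = sin (t/2)"
  have abnd: "15707/10^4 \<le> a" "a \<le> 15708/10^4" using a_bnd unfolding a_def by simp_all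
  have pia: "pi = 2 * a" unfolding a_def by simp
  have a0: "0 < a" using abnd by simp
  have x1: "1 \<le> x" using abnd t1 unfolding x_def by simp
  have x0: "0 < x" using x1 by simp
  have s0: "0 < s" unfolding s_def using t0 t1 pi_gt3 by (intro sin_gt_zero) auto
  have sinx: "sin x = c" unfolding x_def c_def a_def by (simp add: sin_cos_eq)
  have cosx: "cos x = s" unfolding x_def s_def a_def by (simp add: cos_sin_eq)
  have tanx: "tan x = c / s" by (simp add: tan_def sinx cosx)
  define M where "M = a^2 + (5 * a - 2 * a^3) * t + (15 - 6 * a^2) * t^2"
  define h where "h = a^6 * x - M * x^5"
  define Q where "Q = a^6 * c^2 * s + a^6 * x * c - 2 * a^6 * x^2 * s - M * x^5 * c"
  have K: "16 / pi ^ 4 + d_fun x = M / a^6"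
    unfolding d_fun_def c_fun_def M_def pia x_def using a0 by (simp add: field_simps) algebra
  have geq: "2 + (M / a^6) * x ^ 3 * tan x - ((sin x / x) ^ 2 + tan x / x) = - Q / (a^6 * x^2 * s)"
    unfolding sinx tanx Q_def using a0 x0 s0 by (simp add: field_simps) (simp add: eval_nat_numeral)
  have c2: "c^2 = 1 - s^2" unfolding c_def s_def using sin_cos_squared_add[of t] by linarith
  have Qeq: "Q = a^6 * s * (1 - s^2 - 2 * x^2) + c * h"
    unfolding Q_def h_def c2[symmetric] by (simp add: algebra_simps)
  define SL where "SL = (5040 * t - 840 * t^3 + 42 * t^5 - t^7)/5040"
  define KL where "KL = (322560 * t - 13440 * t^3 + 168 * t^5 - t^7)/645120"
  have sSL: "SL \<le> s" unfolding s_def SL_def using sin_bounds(1)[of t] t0 by simp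
  have kKL: "KL \<le> k" unfolding k_def KL_def using sin_bounds_half(1)[of t] t0 by simp
  have t3: "t^3 \<le> t" using pow_le_self[of t 2] t0 t1 by (simp add: eval_nat_numeral)
  have t7: "t^7 \<le> t" using pow_le_self[of t 6] t0 t1 by (simp add: eval_nat_numeral)
  have t5: "0 \<le> t^5" using t0 by simp
  have KLn: "0 \<le> 322560 * t - 13440 * t^3 + 168 * t^5 - t^7" using t3 t7 t5 t0 by linarith
  have KL0: "0 \<le> KL" unfolding KL_def using KLn by simp
  have ck: "c = 1 - 2 * k^2" unfolding c_def k_def using cos_double_sin[of "t/2"] by simp
  have k2: "KL^2 \<le> k^2" using KL0 kKL by (intro power_mono) auto
  have hH: "h = t * Hd1 a t" unfolding h_def M_def x_def Hd1_def by algebra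
  have H: "0 < Hd1 a t" using abnd t0 t1 by (intro Hd1_pos) auto
  have h0: "0 \<le> h" unfolding hH using t0 H by simp
  have m1: "a^6 * s * (1 - s^2 - 2 * x^2) \<le> a^6 * SL * (1 - SL^2 - 2 * x^2)"
    using a0 sSL x1 by (intro cubic_mono6) auto
  have m2: "c * h \<le> (1 - 2 * KL^2) * h"
    unfolding ck using k2 h0 by (intro mult_right_mono) auto
  define Qu where "Qu = a^6 * SL * (1 - SL^2 - 2 * x^2) + (1 - 2 * KL^2) * h"
  have QQu: "Q \<le> Qu" unfolding Qeq Qu_def using m1 m2 by linarith
  have e1: "5040 * SL = 5040 * t - 840 * t^3 + 42 * t^5 - t^7" unfolding SL_def by simp
  have e2: "645120 * KL = 322560 * t - 13440 * t^3 + 168 * t^5 - t^7" unfolding KL_def by simp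
  have id1: "5040^3 * 128^2 * Qu = 128^2 * a^6 * (5040 * SL) * (5040^2 - (5040 * SL)^2 - 2 * 5040^2 * x^2)
       + 5040 * (645120^2 - 2 * (645120 * KL)^2) * h"
    unfolding Qu_def by algebra
  have id2: "128^2 * a^6 * (5040 * t - 840 * t^3 + 42 * t^5 - t^7) * (5040^2 - (5040 * t - 840 * t^3 + 42 * t^5 - t^7)^2 - 2 * 5040^2 * (a-t)^2)
   + 5040 * (645120^2 - 2 * (322560 * t - 13440 * t^3 + 168 * t^5 - t^7)^2) * (a^6 * (a-t) - (a^2 + (5 * a - 2 * a^3) * t + (15 - 6 * a^2) * t^2) * (a-t)^5)
    = - (t^3 * Rh a t)"
    unfolding Rh_def by algebra
  have "5040^3 * 128^2 * Qu = - (t^3 * Rh a t)"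
    unfolding id1 e1 e2 id2[symmetric] h_def M_def x_def by simp
  moreover have "0 < Rh a t" using abnd t0 t1 by (intro Rh_pos) auto
  ultimately have "5040^3 * 128^2 * Qu < 0" using t0 by simp
  then have "Qu < 0" by (simp add: mult_less_0_iff)
  then have "Q < 0" using QQu by linarith
  then have "0 < - Q / (a^6 * x^2 * s)" using a0 x0 s0 by (simp add: divide_neg_pos)
  then have "(sin x / x) ^ 2 + tan x / x < 2 + (16 / pi ^ 4 + d_fun x) * x ^ 3 * tan x"
    using geq unfolding K by linarith
  then show ?thesis unfolding x_def a_def .
qed

theorem theorem2:
  shows "(\<forall>x::real. pi / 2 - 1 / 3 < x \<and> x < pi / 2 \<longrightarrow>
            2 + (16 / pi ^ 4 + c_fun x) * x ^ 3 * tan x < (sin x / x) ^ 2 + tan x / x)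
       \<and> (\<forall>x::real. pi / 2 - 1 / 2 < x \<and> x < pi / 2 \<longrightarrow>
            (sin x / x) ^ 2 + tan x / x < 2 + (16 / pi ^ 4 + d_fun x) * x ^ 3 * tan x)"
proof (intro conjI allI impI)
  fix x :: real
  assume "pi / 2 - 1 / 3 < x \<and> x < pi / 2"
  then have "0 < pi/2 - x" "pi/2 - x < 1/3" by auto
  from part1[OF this] show "2 + (16 / pi ^ 4 + c_fun x) * x ^ 3 * tan x < (sin x / x) ^ 2 + tan x / x"
    by simp
next
  fix x :: real
  assume "pi / 2 - 1 / 2 < x \<and> x < pi / 2"
  then have "0 < pi/2 - x" "pi/2 - x < 1/2" by auto
  from part2[OF this] show "(sin x / x) ^ 2 + tan x / x < 2 + (16 / pi ^ 4 + d_fun x) * x ^ 3 * tan x"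
    by simp
qed

end
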